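(* Let $s>-1/2$. Then for every $t\in\mathbb{R}$ the bilinear operator $B_2$ defined in the context maps $\dot H^s\times\dot H^s$ into $\dot H^{s+1}$ and satisfies $$\|B_2(u,v)\|_{\dot H^{s+1}}\le c_2(s+1)\|u\|_{\dot H^s}\|v\|_{\dot H^s},$$ with a constant $c_2(s+1)$ depending only on $s$.
   Context: Write $\mathbb{Z}_0=\mathbb{Z}\setminus\{0\}$. For $s\in\mathbb{R}$, $\dot H^s$ denotes the Hilbert space of complex sequences $v=(v_k)_{k\in\mathbb{Z}_0}$ with $\|v\|_{\dot H^s}^2=\sum_{k\in\mathbb{Z}_0}|k|^{2s}|v_k|^2<\infty$. For $t\in\mathbb{R}$, $$B_2(u,v)_k=\sum_{k_1+k_2=k,\ k_1,k_2\in\mathbb{Z}_0}\frac{e^{3ikk_1k_2t}u_{k_1}v_{k_2}}{k_1k_2},\qquad k\in\mathbb{Z}_0.$$ *)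

theory Defs
  imports "HOL-Analysis.Analysis"
begin

text \<open>Sequences indexed by Z_0 = Z - {0} are modelled as functions int => complex;
  the value at index 0 is irrelevant (never used).\<close>

definition Z0 :: "int set" where "Z0 = {k. k \<noteq> 0}"

definition Hs_weight :: "real \<Rightarrow> (int \<Rightarrow> complex) \<Rightarrow> int \<Rightarrow> real" where
  "Hs_weight s v k = (real_of_int \<bar>k\<bar>) powr (2 * s) * (cmod (v k))\<^sup>2"

definition in_Hs :: "real \<Rightarrow> (int \<Rightarrow> complex) \<Rightarrow> bool" where
  "in_Hs s v \<longleftrightarrow> Hs_weight s v summable_on Z0"

definition Hs_norm :: "real \<Rightarrow> (int \<Rightarrow> complex) \<Rightarrow> real" where
  "Hs_norm s v = sqrt (infsum (Hs_weight s v) Z0)"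

definition B2_term :: "real \<Rightarrow> (int \<Rightarrow> complex) \<Rightarrow> (int \<Rightarrow> complex) \<Rightarrow> int \<Rightarrow> int \<Rightarrow> complex" where
  "B2_term t u v k k1 =
     exp (\<i> * of_real (3 * real_of_int (k * k1 * (k - k1)) * t)) * u k1 * v (k - k1)
       / (of_int k1 * of_int (k - k1))"

definition B2_index :: "int \<Rightarrow> int set" where
  "B2_index k = {k1. k1 \<noteq> 0 \<and> k - k1 \<noteq> 0}"

definition B2 :: "real \<Rightarrow> (int \<Rightarrow> complex) \<Rightarrow> (int \<Rightarrow> complex) \<Rightarrow> int \<Rightarrow> complex" where
  "B2 t u v k = (if k = 0 then 0 else infsum (B2_term t u v k) (B2_index k))"

end

theory Submission
  imports Defs
begin


lemma amgm: "(a::real) * b \<le> (a^2 + b^2) / 2"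
proof -
  have "0 \<le> (a - b)^2" by simp
  then show ?thesis by (simp add: power2_diff)
qed

lemma cs_infsum:
  fixes f g :: "'a \<Rightarrow> real"
  assumes f0: "\<And>k. f k \<ge> 0" and g0: "\<And>k. g k \<ge> 0"
    and fs: "(\<lambda>k. (f k)^2) summable_on UNIV" and gs: "(\<lambda>k. (g k)^2) summable_on UNIV"
  shows "(\<lambda>k. f k * g k) summable_on UNIV \<and>
         infsum (\<lambda>k. f k * g k) UNIV \<le> sqrt (infsum (\<lambda>k. (f k)^2) UNIV) * sqrt (infsum (\<lambda>k. (g k)^2) UNIV)"
proof
  have "(\<lambda>k. ((f k)^2 + (g k)^2) * (1/2)) summable_on UNIV"
    by (rule summable_on_cmult_left[OF summable_on_add[OF fs gs]])
  then have "(\<lambda>k. ((f k)^2 + (g k)^2) / 2) summable_on UNIV" by simp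
  moreover have "f k * g k \<le> ((f k)^2 + (g k)^2) / 2" for k
    by (rule amgm)
  ultimately show sm: "(\<lambda>k. f k * g k) summable_on UNIV"
    by (rule summable_on_comparison_test) (simp add: f0 g0)
  show "infsum (\<lambda>k. f k * g k) UNIV \<le> sqrt (infsum (\<lambda>k. (f k)^2) UNIV) * sqrt (infsum (\<lambda>k. (g k)^2) UNIV)"
  proof (rule infsum_le_finite_sums[OF sm])
    fix F :: "'a set" assume F: "finite F"
    have "(\<Sum>k\<in>F. f k * g k) = (\<Sum>k\<in>F. \<bar>f k\<bar> * \<bar>g k\<bar>)" using f0 g0 by simp
    also have "\<dots> \<le> L2_set f F * L2_set g F" by (rule L2_set_mult_ineq)
    also have "\<dots> \<le> sqrt (infsum (\<lambda>k. (f k)^2) UNIV) * sqrt (infsum (\<lambda>k. (g k)^2) UNIV)"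
    proof -
      have 1: "(\<Sum>k\<in>F. (f k)^2) \<le> infsum (\<lambda>k. (f k)^2) UNIV"
        by (rule finite_sum_le_infsum[OF fs F]) auto
      have 2: "(\<Sum>k\<in>F. (g k)^2) \<le> infsum (\<lambda>k. (g k)^2) UNIV"
        by (rule finite_sum_le_infsum[OF gs F]) auto
      show ?thesis unfolding L2_set_def
        by (rule mult_mono[OF real_sqrt_le_mono[OF 1] real_sqrt_le_mono[OF 2]]) (auto intro: infsum_nonneg sum_nonneg)
    qed
    finally show "(\<Sum>k\<in>F. f k * g k) \<le> sqrt (infsum (\<lambda>k. (f k)^2) UNIV) * sqrt (infsum (\<lambda>k. (g k)^2) UNIV)" .
  qed
qed

lemma infsum_finite_sum:
  fixes f :: "'i \<Rightarrow> 'a \<Rightarrow> real"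
  assumes "finite F" "\<And>i. i \<in> F \<Longrightarrow> f i summable_on A"
  shows "(\<lambda>x. \<Sum>i\<in>F. f i x) summable_on A \<and> infsum (\<lambda>x. \<Sum>i\<in>F. f i x) A = (\<Sum>i\<in>F. infsum (f i) A)"
  using assms
proof (induction F rule: finite_induct)
  case empty then show ?case by simp
next
  case (insert a F)
  then have IH: "(\<lambda>x. \<Sum>i\<in>F. f i x) summable_on A" "infsum (\<lambda>x. \<Sum>i\<in>F. f i x) A = (\<Sum>i\<in>F. infsum (f i) A)"
    and fa: "f a summable_on A" by auto
  show ?case using insert.hyps IH fa
    by (simp add: summable_on_add infsum_add)
qed

lemma shift_bij: "bij_betw (\<lambda>k1::int. k - k1) UNIV UNIV"
  by (rule bij_betwI[where g="\<lambda>k1. k - k1"]) auto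

lemma shift_summable: "(\<lambda>k1::int. g (k - k1)) summable_on UNIV \<longleftrightarrow> g summable_on UNIV"
  using summable_on_reindex_bij_betw[OF shift_bij] .

lemma shift_infsum: "infsum (\<lambda>k1::int. g (k - k1)) UNIV = infsum g UNIV"
  using infsum_reindex_bij_betw[OF shift_bij] .

lemma conv_bound:
  fixes f g :: "int \<Rightarrow> real"
  assumes f0: "\<And>k. f k \<ge> 0" and g0: "\<And>k. g k \<ge> 0"
    and fs: "(\<lambda>k. (f k)^2) summable_on UNIV" and gs: "g summable_on UNIV"
  shows "(\<forall>k. (\<lambda>k1. f k1 * g (k - k1)) summable_on UNIV) \<and>
         (\<lambda>k. (infsum (\<lambda>k1. f k1 * g (k - k1)) UNIV)^2) summable_on UNIV \<and>
         infsum (\<lambda>k. (infsum (\<lambda>k1. f k1 * g (k - k1)) UNIV)^2) UNIV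
            \<le> infsum (\<lambda>k. (f k)^2) UNIV * (infsum g UNIV)^2"
proof -
  define S where "S = infsum g UNIV"
  define A where "A = infsum (\<lambda>k. (f k)^2) UNIV"
  define h where "h = (\<lambda>k. infsum (\<lambda>k1. f k1 * g (k - k1)) UNIV)"
  define m where "m = (\<lambda>k. infsum (\<lambda>k1. (f k1)^2 * g (k - k1)) UNIV)"
  have S0: "S \<ge> 0" unfolding S_def by (rule infsum_nonneg) (simp add: g0)
  have A0: "A \<ge> 0" unfolding A_def by (rule infsum_nonneg) simp
  have gS: "g k \<le> S" for k
    using finite_sum_le_infsum[OF gs, of "{k}"] g0 unfolding S_def by simp
  have Gs: "(\<lambda>k1. g (k - k1)) summable_on UNIV" for k using gs shift_summable by blast
  have GS: "infsum (\<lambda>k1. g (k - k1)) UNIV = S" for k unfolding S_def by (rule shift_infsum)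
  have mt: "(\<lambda>k1. (f k1)^2 * g (k - k1)) summable_on UNIV" for k
  proof (rule summable_on_comparison_test[OF summable_on_cmult_left[OF fs, of S]])
    fix x show "(f x)^2 * g (k - x) \<le> (f x)^2 * S" by (intro mult_left_mono gS) simp
    show "0 \<le> (f x)^2 * g (k - x)" using g0 by simp
  qed
  have cs: "(\<lambda>k1. f k1 * g (k - k1)) summable_on UNIV \<and> h k \<le> sqrt (m k) * sqrt S" for k
  proof -
    have "(\<lambda>k1. (f k1 * sqrt (g (k - k1))) * sqrt (g (k - k1))) summable_on UNIV \<and>
      infsum (\<lambda>k1. (f k1 * sqrt (g (k - k1))) * sqrt (g (k - k1))) UNIV
       \<le> sqrt (infsum (\<lambda>k1. (f k1 * sqrt (g (k - k1)))^2) UNIV) * sqrt (infsum (\<lambda>k1. (sqrt (g (k - k1)))^2) UNIV)"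
      by (rule cs_infsum) (use f0 g0 mt Gs in \<open>auto simp: power_mult_distrib\<close>)
    moreover have "(f k1 * sqrt (g (k - k1))) * sqrt (g (k - k1)) = f k1 * g (k - k1)" for k1
      using g0[of "k - k1"] by (simp add: mult.assoc)
    moreover have "(f k1 * sqrt (g (k - k1)))^2 = (f k1)^2 * g (k - k1)" for k1
      using g0[of "k - k1"] by (simp add: power_mult_distrib)
    moreover have "(sqrt (g (k - k1)))^2 = g (k - k1)" for k1
      using g0[of "k - k1"] by simp
    ultimately show ?thesis unfolding h_def m_def using GS by simp
  qed
  have h0: "h k \<ge> 0" for k unfolding h_def by (rule infsum_nonneg) (simp add: f0 g0)
  have m0: "m k \<ge> 0" for k unfolding m_def by (rule infsum_nonneg) (simp add: g0)
  have hm: "(h k)^2 \<le> S * m k" for k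
  proof -
    have "(h k)^2 \<le> (sqrt (m k) * sqrt S)^2" using cs[of k] h0[of k] by (intro power_mono) auto
    also have "\<dots> = S * m k" using m0[of k] S0 by (simp add: power_mult_distrib)
    finally show ?thesis .
  qed
  have mF: "sum m F \<le> A * S" if F: "finite F" for F
  proof -
    have "sum m F = infsum (\<lambda>k1. \<Sum>k\<in>F. (f k1)^2 * g (k - k1)) UNIV"
      using infsum_finite_sum[OF F, of "\<lambda>k k1. (f k1)^2 * g (k - k1)" UNIV] mt unfolding m_def by simp
    also have "\<dots> \<le> infsum (\<lambda>k1. (f k1)^2 * S) UNIV"
    proof (rule infsum_mono)
      show "(\<lambda>k1. \<Sum>k\<in>F. (f k1)^2 * g (k - k1)) summable_on UNIV"
        using infsum_finite_sum[OF F, of "\<lambda>k k1. (f k1)^2 * g (k - k1)" UNIV] mt by simp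
      show "(\<lambda>k1. (f k1)^2 * S) summable_on UNIV" by (rule summable_on_cmult_left[OF fs])
      fix k1
      have inj: "inj_on (\<lambda>k. k - k1) F" by (auto simp: inj_on_def)
      have "(\<Sum>k\<in>F. g (k - k1)) = sum g ((\<lambda>k. k - k1) ` F)"
        by (simp add: sum.reindex[OF inj] o_def)
      also have "\<dots> \<le> S" unfolding S_def using F by (intro finite_sum_le_infsum gs) (auto simp: g0)
      finally have "(\<Sum>k\<in>F. g (k - k1)) \<le> S" .
      then show "(\<Sum>k\<in>F. (f k1)^2 * g (k - k1)) \<le> (f k1)^2 * S"
        by (simp add: sum_distrib_left[symmetric] mult_left_mono)
    qed
    also have "\<dots> = A * S" unfolding A_def by (rule infsum_cmult_left) (simp add: fs)
    finally show ?thesis .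
  qed
  have msum: "m summable_on UNIV"
    by (rule nonneg_bdd_above_summable_on) (use m0 mF in \<open>auto intro!: bdd_aboveI\<close>)
  have mle: "infsum m UNIV \<le> A * S" by (rule infsum_le_finite_sums[OF msum mF]) simp
  have h2: "(\<lambda>k. (h k)^2) summable_on UNIV"
    by (rule summable_on_comparison_test[OF summable_on_cmult_right[OF msum, of S]]) (use hm in auto)
  have "infsum (\<lambda>k. (h k)^2) UNIV \<le> infsum (\<lambda>k. S * m k) UNIV"
    by (rule infsum_mono[OF h2 summable_on_cmult_right[OF msum]]) (rule hm)
  also have "\<dots> = S * infsum m UNIV" by (rule infsum_cmult_right) (simp add: msum)
  also have "\<dots> \<le> S * (A * S)" by (rule mult_left_mono[OF mle S0])
  finally have "infsum (\<lambda>k. (h k)^2) UNIV \<le> A * S^2" by (simp add: power2_eq_square algebra_simps)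
  then show ?thesis using cs h2 unfolding h_def A_def S_def by auto
qed



lemma pw_aux:
  fixes x y z r :: real
  assumes "0 < x" "x \<le> y" "0 \<le> z" "z \<le> x + y" "0 < r"
  shows "z powr r * (x powr (-r) * y powr (-r)) \<le> 2 powr r * (x powr (-r) + y powr (-r))"
proof -
  have "z powr r \<le> (2 * y) powr r" using assms by (intro powr_mono2) auto
  also have "\<dots> = 2 powr r * y powr r" using assms by (simp add: powr_mult)
  finally have 1: "z powr r \<le> 2 powr r * y powr r" .
  have yy: "y powr r * y powr (-r) = 1" using assms by (simp add: powr_add[symmetric])
  have "z powr r * (x powr (-r) * y powr (-r)) \<le> (2 powr r * y powr r) * (x powr (-r) * y powr (-r))"
    by (intro mult_right_mono 1) auto
  also have "\<dots> = 2 powr r * x powr (-r) * (y powr r * y powr (-r))" by (simp add: algebra_simps)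
  also have "\<dots> = 2 powr r * x powr (-r)" using yy by simp
  also have "\<dots> \<le> 2 powr r * (x powr (-r) + y powr (-r))" by (intro mult_left_mono) auto
  finally show ?thesis .
qed

lemma pw_bound:
  fixes k k1 :: int and r :: real
  assumes "0 < r"
  shows "real_of_int \<bar>k\<bar> powr r * (real_of_int \<bar>k1\<bar> powr (-r) * real_of_int \<bar>k - k1\<bar> powr (-r))
     \<le> 2 powr r * (real_of_int \<bar>k1\<bar> powr (-r) + real_of_int \<bar>k - k1\<bar> powr (-r))"
proof (cases "k1 = 0 \<or> k - k1 = 0")
  case True then show ?thesis by auto
next
  case False
  have tri: "real_of_int \<bar>k\<bar> \<le> real_of_int \<bar>k1\<bar> + real_of_int \<bar>k - k1\<bar>" by linarith
  show ?thesis
  proof (cases "\<bar>k1\<bar> \<le> \<bar>k - k1\<bar>")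
    case True
    have a: "0 < real_of_int \<bar>k1\<bar>" using False by simp
    have b: "real_of_int \<bar>k1\<bar> \<le> real_of_int \<bar>k - k1\<bar>" using True by linarith
    show ?thesis by (rule pw_aux[OF a b _ tri assms]) simp
  next
    case F2: False
    have "real_of_int \<bar>k\<bar> powr r * (real_of_int \<bar>k - k1\<bar> powr (-r) * real_of_int \<bar>k1\<bar> powr (-r))
     \<le> 2 powr r * (real_of_int \<bar>k - k1\<bar> powr (-r) + real_of_int \<bar>k1\<bar> powr (-r))"
    proof (rule pw_aux[OF _ _ _ _ assms])
      show "0 < real_of_int \<bar>k - k1\<bar>" using False by simp
      show "real_of_int \<bar>k - k1\<bar> \<le> real_of_int \<bar>k1\<bar>" using F2 by linarith
      show "0 \<le> real_of_int \<bar>k\<bar>" by simp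
      show "real_of_int \<bar>k\<bar> \<le> real_of_int \<bar>k - k1\<bar> + real_of_int \<bar>k1\<bar>" using tri by linarith
    qed
    then show ?thesis by (simp add: algebra_simps)
  qed
qed

lemma pseries_int:
  fixes s :: real
  assumes "s > -1/2"
  shows "(\<lambda>k::int. (real_of_int \<bar>k\<bar> powr (-(s+1)))^2) summable_on UNIV"
proof -
  define p where "p = -(s+1) - (s+1)"
  have p: "p < -1" using assms unfolding p_def by simp
  define g where "g = (\<lambda>k::int. real_of_int \<bar>k\<bar> powr p)"
  have eq: "(real_of_int \<bar>k\<bar> powr (-(s+1)))^2 = g k" for k
    unfolding g_def p_def power2_eq_square by (simp add: powr_add[symmetric])
  have nat: "(\<lambda>n::nat. real n powr p) summable_on UNIV"
    using summable_real_powr_iff[of p] p summable_on_UNIV_nonneg_real_iff[of "\<lambda>n::nat. real n powr p"]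
    by simp
  have s1: "g summable_on (int ` UNIV)"
    by (subst summable_on_reindex) (use nat in \<open>auto simp: g_def o_def\<close>)
  have s2: "g summable_on ((\<lambda>n. - int n) ` UNIV)"
    by (subst summable_on_reindex) (use nat in \<open>auto simp: g_def o_def inj_on_def\<close>)
  have s3: "g summable_on {k. k < 0}"
  proof (rule summable_on_subset[OF s2])
    show "{k::int. k < 0} \<subseteq> (\<lambda>n. - int n) ` UNIV"
    proof
      fix k :: int assume "k \<in> {k. k < 0}"
      then have "k = - int (nat (-k))" by simp
      then show "k \<in> (\<lambda>n. - int n) ` UNIV" by blast
    qed
  qed
  have "g summable_on (int ` UNIV \<union> {k. k < 0})"
    by (rule summable_on_Un_disjoint[OF s1 s3]) auto
  moreover have "int ` UNIV \<union> {k. k < 0} = UNIV"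
    by (auto simp: image_iff) (metis nonneg_int_cases not_less)
  ultimately show ?thesis using eq by simp
qed



lemma hw_eq: "Hs_weight s x k = (real_of_int \<bar>k\<bar> powr s * cmod (x k))^2"
proof -
  have "real_of_int \<bar>k\<bar> powr (2 * s) = real_of_int \<bar>k\<bar> powr s * real_of_int \<bar>k\<bar> powr s"
    by (metis mult_2 powr_add)
  then have "real_of_int \<bar>k\<bar> powr (2 * s) = (real_of_int \<bar>k\<bar> powr s)^2"
    by (simp only: power2_eq_square)
  then show ?thesis unfolding Hs_weight_def by (simp only: power_mult_distrib)
qed

lemma hs_univ:
  assumes "in_Hs s x"
  shows "(\<lambda>k. (real_of_int \<bar>k\<bar> powr s * cmod (x k))^2) summable_on UNIV"
    and "Hs_norm s x = sqrt (infsum (\<lambda>k. (real_of_int \<bar>k\<bar> powr s * cmod (x k))^2) UNIV)"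
proof -
  have "Hs_weight s x summable_on Z0" using assms unfolding in_Hs_def .
  moreover have "Hs_weight s x summable_on Z0 \<longleftrightarrow> (\<lambda>k. (real_of_int \<bar>k\<bar> powr s * cmod (x k))^2) summable_on UNIV"
    by (rule summable_on_cong_neutral) (auto simp: Z0_def hw_eq)
  ultimately show "(\<lambda>k. (real_of_int \<bar>k\<bar> powr s * cmod (x k))^2) summable_on UNIV" by simp
  have "infsum (Hs_weight s x) Z0 = infsum (\<lambda>k. (real_of_int \<bar>k\<bar> powr s * cmod (x k))^2) UNIV"
    by (rule infsum_cong_neutral) (auto simp: Z0_def hw_eq)
  then show "Hs_norm s x = sqrt (infsum (\<lambda>k. (real_of_int \<bar>k\<bar> powr s * cmod (x k))^2) UNIV)"
    unfolding Hs_norm_def by simp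
qed

lemma aw_eq: "real_of_int \<bar>k\<bar> powr s * c * real_of_int \<bar>k\<bar> powr (-(s+1)) = c / real_of_int \<bar>k\<bar>"
proof (cases "k = 0")
  case False
  have "real_of_int \<bar>k\<bar> powr s * real_of_int \<bar>k\<bar> powr (-(s+1)) = real_of_int \<bar>k\<bar> powr (-1)"
    by (simp add: powr_add[symmetric])
  also have "\<dots> = inverse (real_of_int \<bar>k\<bar>)" using False by (simp add: powr_minus)
  finally show ?thesis by (simp add: divide_inverse algebra_simps)
qed simp

lemma norm_term:
  "norm (B2_term t u v k k1) =
     (real_of_int \<bar>k1\<bar> powr s * cmod (u k1) * real_of_int \<bar>k1\<bar> powr (-(s+1))) *
     (real_of_int \<bar>k - k1\<bar> powr s * cmod (v (k - k1)) * real_of_int \<bar>k - k1\<bar> powr (-(s+1)))"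
proof -
  have "norm (B2_term t u v k k1) =
     norm (exp (\<i> * of_real (3 * real_of_int (k * k1 * (k - k1)) * t))) * cmod (u k1) * cmod (v (k - k1))
       / (norm (of_int k1 :: complex) * norm (of_int (k - k1) :: complex))"
    unfolding B2_term_def by (simp only: norm_mult norm_divide)
  also have "\<dots> = cmod (u k1) * cmod (v (k - k1)) / (real_of_int \<bar>k1\<bar> * real_of_int \<bar>k - k1\<bar>)"
    by (simp only: norm_exp_i_times norm_of_int mult_1 of_int_abs)
  also have "\<dots> = (cmod (u k1) / real_of_int \<bar>k1\<bar>) * (cmod (v (k - k1)) / real_of_int \<bar>k - k1\<bar>)"
    by (rule times_divide_times_eq[symmetric])
  finally show ?thesis by (simp only: aw_eq)
qed

lemma w_le1: "real_of_int \<bar>k\<bar> powr (-(s+1)) \<le> 1" if "s > -1/2" for k :: int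
proof (cases "k = 0")
  case False
  have "1 \<le> real_of_int \<bar>k\<bar> powr (s+1)" using False that by (intro ge_one_powr_ge_zero) auto
  then have "inverse (real_of_int \<bar>k\<bar> powr (s+1)) \<le> 1" by (simp add: inverse_le_1_iff)
  then show ?thesis by (simp only: powr_minus)
qed simp



theorem lemma7p2:
  fixes s :: real
  assumes "s > -1/2"
  shows "\<exists>C. \<forall>t::real. \<forall>u v. in_Hs s u \<longrightarrow> in_Hs s v \<longrightarrow>
           (\<forall>k\<in>Z0. B2_term t u v k summable_on B2_index k)
           \<and> in_Hs (s + 1) (B2 t u v)
           \<and> Hs_norm (s + 1) (B2 t u v) \<le> C * Hs_norm s u * Hs_norm s v"
proof -
  define w where "w = (\<lambda>k::int. real_of_int \<bar>k\<bar> powr (-(s+1)))"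
  define K where "K = (2::real) powr (s+1)"
  define W where "W = infsum (\<lambda>k. (w k)^2) UNIV"
  have wsum: "(\<lambda>k. (w k)^2) summable_on UNIV" unfolding w_def by (rule pseries_int[OF assms])
  have w0: "w k \<ge> 0" for k unfolding w_def by simp
  have w1: "w k \<le> 1" for k unfolding w_def by (rule w_le1[OF assms])
  have K0: "K \<ge> 0" unfolding K_def by simp
  have W0: "W \<ge> 0" unfolding W_def by (rule infsum_nonneg) simp
  show ?thesis
  proof (intro exI[of _ "2 * K * sqrt W"] allI impI conjI)
    fix t :: real and u v :: "int \<Rightarrow> complex"
    assume hu: "in_Hs s u" and hv: "in_Hs s v"
    define \<alpha> where "\<alpha> = (\<lambda>k::int. real_of_int \<bar>k\<bar> powr s * cmod (u k))"
    define \<beta> where "\<beta> = (\<lambda>k::int. real_of_int \<bar>k\<bar> powr s * cmod (v k))"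
    define A where "A = infsum (\<lambda>k. (\<alpha> k)^2) UNIV"
    define B where "B = infsum (\<lambda>k. (\<beta> k)^2) UNIV"
    define \<phi> where "\<phi> = (\<lambda>k. \<alpha> k * w k)"
    define \<psi> where "\<psi> = (\<lambda>k. \<beta> k * w k)"
    have as: "(\<lambda>k. (\<alpha> k)^2) summable_on UNIV" and nu: "Hs_norm s u = sqrt A"
      using hs_univ[OF hu] unfolding \<alpha>_def A_def by auto
    have bs: "(\<lambda>k. (\<beta> k)^2) summable_on UNIV" and nv: "Hs_norm s v = sqrt B"
      using hs_univ[OF hv] unfolding \<beta>_def B_def by auto
    have a0: "\<alpha> k \<ge> 0" for k unfolding \<alpha>_def by simp
    have b0: "\<beta> k \<ge> 0" for k unfolding \<beta>_def by simp
    have A0: "A \<ge> 0" unfolding A_def by (rule infsum_nonneg) simp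
    have B0: "B \<ge> 0" unfolding B_def by (rule infsum_nonneg) simp
    have ph0: "\<phi> k \<ge> 0" for k unfolding \<phi>_def using a0 w0 by simp
    have ps0: "\<psi> k \<ge> 0" for k unfolding \<psi>_def using b0 w0 by simp
    have phs: "\<phi> summable_on UNIV" and phle: "infsum \<phi> UNIV \<le> sqrt A * sqrt W"
      using cs_infsum[of \<alpha> w, OF a0 w0 as wsum] unfolding \<phi>_def A_def W_def by auto
    have pss: "\<psi> summable_on UNIV" and psle: "infsum \<psi> UNIV \<le> sqrt B * sqrt W"
      using cs_infsum[of \<beta> w, OF b0 w0 bs wsum] unfolding \<psi>_def B_def W_def by auto
    define P where "P = (\<lambda>k. infsum (\<lambda>k1. \<alpha> k1 * \<psi> (k - k1)) UNIV)"
    define Q where "Q = (\<lambda>k. infsum (\<lambda>k1. \<beta> k1 * \<phi> (k - k1)) UNIV)"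
    note c1 = conv_bound[of \<alpha> \<psi>, OF a0 ps0 as pss]
    note c2 = conv_bound[of \<beta> \<phi>, OF b0 ph0 bs phs]
    have Psum: "\<And>k. (\<lambda>k1. \<alpha> k1 * \<psi> (k - k1)) summable_on UNIV" using c1 by blast
    have P2: "(\<lambda>k. (P k)^2) summable_on UNIV" using c1 unfolding P_def by blast
    have Qsum0: "\<And>k. (\<lambda>k1. \<beta> k1 * \<phi> (k - k1)) summable_on UNIV" using c2 by blast
    have Q2: "(\<lambda>k. (Q k)^2) summable_on UNIV" using c2 unfolding Q_def by blast
    have SPs: "(infsum \<psi> UNIV)^2 \<le> B * W"
    proof -
      have "(infsum \<psi> UNIV)^2 \<le> (sqrt B * sqrt W)^2"
        using psle by (intro power_mono) (auto intro: infsum_nonneg ps0)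
      also have "\<dots> = B * W" using B0 W0 by (simp add: power_mult_distrib)
      finally show ?thesis .
    qed
    have SPh: "(infsum \<phi> UNIV)^2 \<le> A * W"
    proof -
      have "(infsum \<phi> UNIV)^2 \<le> (sqrt A * sqrt W)^2"
        using phle by (intro power_mono) (auto intro: infsum_nonneg ph0)
      also have "\<dots> = A * W" using A0 W0 by (simp add: power_mult_distrib)
      finally show ?thesis .
    qed
    have P2le: "infsum (\<lambda>k. (P k)^2) UNIV \<le> A * (B * W)"
    proof -
      have "infsum (\<lambda>k. (P k)^2) UNIV \<le> A * (infsum \<psi> UNIV)^2" using c1 unfolding P_def A_def by blast
      also have "\<dots> \<le> A * (B * W)" by (rule mult_left_mono[OF SPs A0])
      finally show ?thesis .
    qed
    have Q2le: "infsum (\<lambda>k. (Q k)^2) UNIV \<le> B * (A * W)"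
    proof -
      have "infsum (\<lambda>k. (Q k)^2) UNIV \<le> B * (infsum \<phi> UNIV)^2" using c2 unfolding Q_def B_def by blast
      also have "\<dots> \<le> B * (A * W)" by (rule mult_left_mono[OF SPh B0])
      finally show ?thesis .
    qed
    have Qsum: "(\<lambda>k1. \<phi> k1 * \<beta> (k - k1)) summable_on UNIV" for k
      using shift_summable[of "\<lambda>j. \<beta> j * \<phi> (k - j)" k] Qsum0[of k] by (simp add: mult.commute)
    have Qeq: "infsum (\<lambda>k1. \<phi> k1 * \<beta> (k - k1)) UNIV = Q k" for k
      using shift_infsum[of "\<lambda>j. \<beta> j * \<phi> (k - j)" k] unfolding Q_def by (simp add: mult.commute)
    have nt: "norm (B2_term t u v k k1) = \<phi> k1 * \<psi> (k - k1)" for k k1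
      unfolding \<phi>_def \<psi>_def \<alpha>_def \<beta>_def w_def by (rule norm_term)
    have ntle: "norm (B2_term t u v k k1) \<le> \<alpha> k1 * \<psi> (k - k1)" for k k1
      unfolding nt \<phi>_def using a0[of k1] w1[of k1] ps0[of "k - k1"]
      by (intro mult_right_mono) (auto intro: mult_left_le)
    have abss: "(\<lambda>k1. norm (B2_term t u v k k1)) summable_on UNIV" for k
      by (rule summable_on_comparison_test[OF Psum ntle]) simp
    have tsum: "B2_term t u v k summable_on UNIV" for k
      by (rule abs_summable_summable) (use abss in simp)
    show "\<forall>k\<in>Z0. B2_term t u v k summable_on B2_index k"
      using summable_on_subset[OF tsum] by blast
    have zero_out: "B2_term t u v k k1 = 0" if "k1 \<notin> B2_index k" for k k1
      using that unfolding B2_index_def B2_term_def by auto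
    have B2eq: "B2 t u v k = infsum (B2_term t u v k) UNIV" if "k \<noteq> 0" for k
    proof -
      have "infsum (B2_term t u v k) (B2_index k) = infsum (B2_term t u v k) UNIV"
        by (rule infsum_cong_neutral) (auto simp: zero_out)
      then show ?thesis unfolding B2_def using that by simp
    qed
    have P0: "P k \<ge> 0" for k unfolding P_def by (rule infsum_nonneg) (simp add: a0 ps0)
    have Q0: "Q k \<ge> 0" for k unfolding Q_def by (rule infsum_nonneg) (simp add: b0 ph0)
    have pw: "real_of_int \<bar>k\<bar> powr (s+1) * norm (B2_term t u v k k1)
               \<le> K * (\<alpha> k1 * \<psi> (k - k1) + \<phi> k1 * \<beta> (k - k1))" for k k1
    proof -
      have "real_of_int \<bar>k\<bar> powr (s+1) * norm (B2_term t u v k k1)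
           = (\<alpha> k1 * \<beta> (k - k1)) * (real_of_int \<bar>k\<bar> powr (s+1) * (w k1 * w (k - k1)))"
        unfolding nt \<phi>_def \<psi>_def by (simp add: algebra_simps)
      also have "\<dots> \<le> (\<alpha> k1 * \<beta> (k - k1)) * (K * (w k1 + w (k - k1)))"
        unfolding w_def K_def using a0 b0 assms
        by (intro mult_left_mono pw_bound) auto
      also have "\<dots> = K * (\<alpha> k1 * \<psi> (k - k1) + \<phi> k1 * \<beta> (k - k1))"
        unfolding \<phi>_def \<psi>_def by (simp add: algebra_simps)
      finally show ?thesis .
    qed
    have kb: "real_of_int \<bar>k\<bar> powr (s+1) * norm (B2 t u v k) \<le> K * (P k + Q k)" for k
    proof (cases "k = 0")
      case True then show ?thesis using K0 P0 Q0 by (simp add: B2_def)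
    next
      case False
      have "norm (B2 t u v k) \<le> infsum (\<lambda>k1. norm (B2_term t u v k k1)) UNIV"
        unfolding B2eq[OF False] by (rule norm_infsum_bound) (use abss in simp)
      then have "real_of_int \<bar>k\<bar> powr (s+1) * norm (B2 t u v k)
          \<le> real_of_int \<bar>k\<bar> powr (s+1) * infsum (\<lambda>k1. norm (B2_term t u v k k1)) UNIV"
        by (intro mult_left_mono) auto
      also have "\<dots> = infsum (\<lambda>k1. real_of_int \<bar>k\<bar> powr (s+1) * norm (B2_term t u v k k1)) UNIV"
        by (rule infsum_cmult_right[symmetric]) (use abss in simp)
      also have "\<dots> \<le> infsum (\<lambda>k1. K * (\<alpha> k1 * \<psi> (k - k1) + \<phi> k1 * \<beta> (k - k1))) UNIV"
        by (rule infsum_mono[OF summable_on_cmult_right[OF abss] summable_on_cmult_right[OF summable_on_add[OF Psum Qsum]] pw])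
      also have "\<dots> = K * (P k + Q k)"
        unfolding P_def Qeq[symmetric]
        by (simp add: infsum_cmult_right summable_on_add Psum Qsum infsum_add)
      finally show ?thesis .
    qed
    define bd where "bd = (\<lambda>k. 2 * K^2 * ((P k)^2 + (Q k)^2))"
    have bds: "bd summable_on UNIV" unfolding bd_def
      by (intro summable_on_cmult_right summable_on_add P2 Q2)
    have hwle: "Hs_weight (s+1) (B2 t u v) k \<le> bd k" for k
    proof -
      have "Hs_weight (s+1) (B2 t u v) k = (real_of_int \<bar>k\<bar> powr (s+1) * norm (B2 t u v k))^2"
        by (rule hw_eq)
      also have "\<dots> \<le> (K * (P k + Q k))^2"
        using kb[of k] by (intro power_mono) auto
      also have "\<dots> = K^2 * (P k + Q k)^2" by (simp add: power_mult_distrib)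
      also have "\<dots> \<le> K^2 * (2 * ((P k)^2 + (Q k)^2))"
      proof (rule mult_left_mono)
        show "(P k + Q k)^2 \<le> 2 * ((P k)^2 + (Q k)^2)"
          using zero_le_power2[of "P k - Q k"] by (simp add: power2_eq_square algebra_simps)
      qed simp
      also have "\<dots> = bd k" unfolding bd_def by simp
      finally show ?thesis .
    qed
    have hw0: "Hs_weight (s+1) (B2 t u v) k \<ge> 0" for k unfolding Hs_weight_def by simp
    have hwsU: "Hs_weight (s+1) (B2 t u v) summable_on UNIV"
      by (rule summable_on_comparison_test[OF bds hwle hw0])
    show "in_Hs (s + 1) (B2 t u v)" unfolding in_Hs_def
      using summable_on_subset[OF hwsU] by blast
    have "infsum (Hs_weight (s+1) (B2 t u v)) Z0 \<le> infsum bd UNIV"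
      by (rule infsum_mono_neutral[OF summable_on_subset[OF hwsU] bds])
         (use hwle in \<open>auto simp: bd_def K0 P0 Q0\<close>)
    also have "\<dots> = 2 * K^2 * (infsum (\<lambda>k. (P k)^2) UNIV + infsum (\<lambda>k. (Q k)^2) UNIV)"
      unfolding bd_def by (simp add: infsum_cmult_right summable_on_add P2 Q2 infsum_add)
    also have "\<dots> \<le> 2 * K^2 * (A * (B * W) + B * (A * W))"
      by (intro mult_left_mono add_mono P2le Q2le) auto
    also have "\<dots> = (2 * K * sqrt W * sqrt A * sqrt B)^2"
      using A0 B0 W0 by (simp add: power_mult_distrib)
    finally have "Hs_norm (s + 1) (B2 t u v) \<le> sqrt ((2 * K * sqrt W * sqrt A * sqrt B)^2)"
      unfolding Hs_norm_def by (rule real_sqrt_le_mono)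
    also have "\<dots> = 2 * K * sqrt W * sqrt A * sqrt B" using K0 A0 B0 W0 by simp
    finally show "Hs_norm (s + 1) (B2 t u v) \<le> 2 * K * sqrt W * Hs_norm s u * Hs_norm s v"
      unfolding nu nv .
  qed
qed

end
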